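(* Let $g(\tau_L,\tau_R) = (\tau_R^2, \tau_L\tau_R)$, $\alpha_0(\tau_L,\tau_R) = \tau_L\tau_R + 1$, $\phi_0(\tau_L,\tau_R) = \tau_L\tau_R + \tau_L - \tau_R$, and for $n \ge 0$ let $$\mathcal{R}_n = \left\{ (\tau_L,\tau_R) \in \mathbb{R}^2 \,\middle|\, \tau_R < -1,\ \phi_0\big(g^n(\tau_L,\tau_R)\big) > 0,\ \phi_0\big(g^{n+1}(\tau_L,\tau_R)\big) \le 0,\ \alpha_0(\tau_L,\tau_R) < 0 \right\}.$$ If $(\tau_L,\tau_R) \in \mathcal{R}_n$ with $n \ge 1$, then $g(\tau_L,\tau_R) \in \mathcal{R}_{n-1}$.
   Context: These objects arise from the skew tent map family $x \mapsto \tau_L x + 1$ for $x \le 0$, $x \mapsto \tau_R x + 1$ for $x \ge 0$; $g$ is the renormalisation operator associated with the substitution $(L,R)\mapsto(RR,LR)$, and $g^n$ denotes the $n$-fold composition. *)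

theory Defs
  imports Complex_Main
begin

definition g :: "real \<times> real \<Rightarrow> real \<times> real" where
  "g p = ((snd p)^2, fst p * snd p)"

definition alpha0 :: "real \<times> real \<Rightarrow> real" where
  "alpha0 p = fst p * snd p + 1"

definition phi0 :: "real \<times> real \<Rightarrow> real" where
  "phi0 p = fst p * snd p + fst p - snd p"

definition R :: "nat \<Rightarrow> (real \<times> real) set" where
  "R n = {p. snd p < -1 \<and> phi0 ((g ^^ n) p) > 0 \<and> phi0 ((g ^^ (n+1)) p) \<le> 0 \<and> alpha0 p < 0}"

end

theory Submission
  imports Defs
begin

theorem proposition2p2:
  fixes tL tR :: real and n :: nat
  assumes "n \<ge> 1" and "(tL, tR) \<in> R n"
  shows "g (tL, tR) \<in> R (n - 1)"
proof -
  obtain m where n: "n = Suc m" using assms(1) by (cases n) auto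
  have h: "tR < -1" "phi0 ((g ^^ n) (tL,tR)) > 0" "phi0 ((g ^^ (n+1)) (tL,tR)) \<le> 0"
    "tL * tR + 1 < 0" using assms(2) by (auto simp: R_def alpha0_def)
  have fs: "\<And>k x. (g ^^ Suc k) x = (g ^^ k) (g x)" by (simp only: funpow_Suc_right comp_apply)
  have e1: "(g ^^ m) (g (tL,tR)) = (g ^^ n) (tL,tR)" unfolding n by (rule fs[symmetric])
  have e2: "(g ^^ (m+1)) (g (tL,tR)) = (g ^^ (n+1)) (tL,tR)" unfolding n
    using fs[of "Suc m"] by simp
  have m1: "1 < -tR" using h(1) by simp
  have "1 * 1 < (-tR) * (-tR)" using m1 by (intro mult_strict_mono') simp_all
  hence sq: "tR^2 > 1" by (simp add: power2_eq_square)
  have "tR^2 * (tL*tR) < tL*tR" using sq h(4) by (simp add: mult_less_cancel_right2)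
  hence a: "tR^2 * (tL*tR) + 1 < 0" using h(4) by linarith
  have gp: "g (tL,tR) = (tR^2, tL*tR)" by (simp add: g_def)
  show ?thesis unfolding R_def mem_Collect_eq
    using h e1 e2 a unfolding n by (simp add: gp alpha0_def)
qed

end
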